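(* Let $\mathcal{H}$ be a hedgehog with support function $h$ and average width $\overline{w}$, let $k>2$ be an integer, and let $\mathcal{P}_k$ be its $k$th Order Preserving Set. For $s\in[0,2\pi]$, the point $\mathcal{P}_k(s)$ is singular (i.e. $\mathcal{P}_k'(s)=0$) if and only if \[ \frac1k\sum_{j=1}^{k}\rho_{\mathcal{H}}\Big(s+\frac{2\pi j}{k}\Big)=\frac12\overline{w}. \] Furthermore, a singular point $\mathcal{P}_k(s)$ is a cusp if and only if $\sum_{j=1}^{k}\rho_{\mathcal{H}}'\big(s+\frac{2\pi j}{k}\big)\neq0$.
   Context: Write $u(s)=(\cos s,\sin s)$, $u'(s)=(-\sin s,\cos s)$. A hedgehog is a closed planar curve determined by a smooth $2\pi$-periodic function $h$ (its support function) via $\mathcal{H}(s)=h(s)u(s)+h'(s)u'(s)$. Its signed radius of curvature at parameter $s$ is $\rho_{\mathcal{H}}(s)=h(s)+h''(s)$, and its average width is $\overline{w}=\frac1\pi\int_0^{2\pi}h(s)\,ds$. For $(x,y)\in\mathbb{R}^2$ let $(x,y)^\perp=(-y,x)$. The $k$th Order Preserving Set of $\mathcal{H}$ is the curve $\mathcal{P}_k(s)=\frac{1}{k}\sum_{j=1}^{k}\Big(\cos\big(\tfrac{2\pi j}{k}\big)\,\mathcal{H}\big(s+\tfrac{2\pi j}{k}\big)-\sin\big(\tfrac{2\pi j}{k}\big)\,\mathcal{H}\big(s+\tfrac{2\pi j}{k}\big)^{\perp}\Big)-\frac{1}{2}\overline{w}\,u(s)$. A singular point $f(s_0)$ of a smooth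 curve $f$ is a cusp if $f$ is locally diffeomorphic (in source and target) near $s_0$ to $t\mapsto(t^2,t^3)$ at $t=0$; equivalently $f'(s_0)=0$ and $\det(f''(s_0),f'''(s_0))\neq0$. *)

theory Defs
  imports "HOL-Analysis.Analysis"
begin

definition smooth_fun :: "(real \<Rightarrow> real) \<Rightarrow> bool" where
  "smooth_fun h \<longleftrightarrow> (\<forall>n x. ((deriv ^^ n) h) differentiable (at x))"

definition uvec :: "real \<Rightarrow> real \<times> real" where
  "uvec s = (cos s, sin s)"

definition uvec' :: "real \<Rightarrow> real \<times> real" where
  "uvec' s = (- sin s, cos s)"

definition perp :: "real \<times> real \<Rightarrow> real \<times> real" where
  "perp p = (- snd p, fst p)"

definition hedgehog :: "(real \<Rightarrow> real) \<Rightarrow> real \<Rightarrow> real \<times> real" where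
  "hedgehog h s = h s *\<^sub>R uvec s + deriv h s *\<^sub>R uvec' s"

definition curv_radius :: "(real \<Rightarrow> real) \<Rightarrow> real \<Rightarrow> real" where
  "curv_radius h s = h s + deriv (deriv h) s"

definition avg_width :: "(real \<Rightarrow> real) \<Rightarrow> real" where
  "avg_width h = (1 / pi) * integral {0..2*pi} h"

definition OPS :: "(real \<Rightarrow> real) \<Rightarrow> nat \<Rightarrow> real \<Rightarrow> real \<times> real" where
  "OPS h k s =
     (1 / real k) *\<^sub>R (\<Sum>j = 1..k.
        cos (2 * pi * real j / real k) *\<^sub>R hedgehog h (s + 2 * pi * real j / real k)
      - sin (2 * pi * real j / real k) *\<^sub>R perp (hedgehog h (s + 2 * pi * real j / real k)))
     - ((1 / 2) * avg_width h) *\<^sub>R uvec s"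

definition cderiv :: "(real \<Rightarrow> real \<times> real) \<Rightarrow> real \<Rightarrow> real \<times> real" where
  "cderiv f = (\<lambda>s. vector_derivative f (at s))"

definition det2 :: "real \<times> real \<Rightarrow> real \<times> real \<Rightarrow> real" where
  "det2 a b = fst a * snd b - snd a * fst b"

definition singular_point :: "(real \<Rightarrow> real \<times> real) \<Rightarrow> real \<Rightarrow> bool" where
  "singular_point f s0 \<longleftrightarrow> cderiv f s0 = 0"

(* cusp, via the stated equivalent criterion f'(s0)=0, det(f''(s0), f'''(s0)) \<noteq> 0 *)
definition is_cusp :: "(real \<Rightarrow> real \<times> real) \<Rightarrow> real \<Rightarrow> bool" where
  "is_cusp f s0 \<longleftrightarrow> cderiv f s0 = 0 \<and>
     det2 (cderiv (cderiv f) s0) (cderiv (cderiv (cderiv f)) s0) \<noteq> 0"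

end

theory Submission
  imports Defs
begin

lemma smooth_D:
  assumes "smooth_fun h"
  shows "((\<lambda>s. (deriv ^^ n) h (s + t)) has_real_derivative (deriv ^^ Suc n) h (x + t)) (at x)"
proof -
  have "(deriv ^^ n) h differentiable (at (x+t))" using assms unfolding smooth_fun_def by blast
  hence "((deriv ^^ n) h has_real_derivative deriv ((deriv ^^ n) h) (x+t)) (at (x+t))"
    using DERIV_deriv_iff_real_differentiable by blast
  thus ?thesis using DERIV_shift[of "(deriv ^^ n) h" _ x t] by simp
qed

lemma smooth_D0: "smooth_fun h \<Longrightarrow> ((\<lambda>s. h (s + t)) has_real_derivative deriv h (x + t)) (at x)"
  using smooth_D[of h 0] by simp
lemma smooth_D1: "smooth_fun h \<Longrightarrow> ((\<lambda>s. deriv h (s + t)) has_real_derivative deriv (deriv h) (x + t)) (at x)"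
  using smooth_D[of h 1] by simp
lemma smooth_D2: "smooth_fun h \<Longrightarrow> ((\<lambda>s. deriv (deriv h) (s + t)) has_real_derivative deriv (deriv (deriv h)) (x + t)) (at x)"
  using smooth_D[of h 2] by (simp add: numeral_2_eq_2)
lemma smooth_D3: "smooth_fun h \<Longrightarrow> ((\<lambda>s. deriv (deriv (deriv h)) (s + t)) has_real_derivative deriv (deriv (deriv (deriv h))) (x + t)) (at x)"
  using smooth_D[of h 3] by (simp add: numeral_3_eq_3)

lemma H_deriv:
  assumes "smooth_fun h"
  shows "((\<lambda>s. hedgehog h (s + t)) has_vector_derivative curv_radius h (x + t) *\<^sub>R uvec' (x + t)) (at x)"
proof -
  have e: "(\<lambda>s. hedgehog h (s + t)) = (\<lambda>s. (h (s+t) * cos (s+t) - deriv h (s+t) * sin (s+t),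
      h (s+t) * sin (s+t) + deriv h (s+t) * cos (s+t)))"
    by (auto simp: hedgehog_def uvec_def uvec'_def fun_eq_iff)
  have c: "((\<lambda>s. cos (s+t)) has_real_derivative - sin (x+t)) (at x)"
    by (auto intro!: derivative_eq_intros)
  have sn: "((\<lambda>s. sin (s+t)) has_real_derivative cos (x+t)) (at x)"
    by (auto intro!: derivative_eq_intros)
  note D0 = smooth_D0[OF assms, of t x] and D1 = smooth_D1[OF assms, of t x]
  have 1: "((\<lambda>s. h (s+t) * cos (s+t) - deriv h (s+t) * sin (s+t)) has_real_derivative
       - curv_radius h (x+t) * sin (x+t)) (at x)"
    using DERIV_diff[OF DERIV_mult[OF D0 c] DERIV_mult[OF D1 sn]]
    by (simp add: curv_radius_def algebra_simps)
  have 2: "((\<lambda>s. h (s+t) * sin (s+t) + deriv h (s+t) * cos (s+t)) has_real_derivative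
       curv_radius h (x+t) * cos (x+t)) (at x)"
    using DERIV_add[OF DERIV_mult[OF D0 sn] DERIV_mult[OF D1 c]]
    by (simp add: curv_radius_def algebra_simps)
  show ?thesis unfolding e
    using has_vector_derivative_Pair[OF 1[unfolded has_real_derivative_iff_has_vector_derivative]
       2[unfolded has_real_derivative_iff_has_vector_derivative]]
    by (simp add: uvec'_def)
qed

lemma bl_perp: "bounded_linear perp"
proof -
  have "perp = (\<lambda>p. (- snd p, fst p))" by (simp add: perp_def fun_eq_iff)
  moreover have "bounded_linear (\<lambda>p::real\<times>real. (- snd p, fst p))"
    by (intro bounded_linear_Pair bounded_linear_minus bounded_linear_fst bounded_linear_snd)
  ultimately show ?thesis by simp
qed

lemma T_deriv:
  assumes "smooth_fun h"
  shows "((\<lambda>s. cos a *\<^sub>R hedgehog h (s + a) - sin a *\<^sub>R perp (hedgehog h (s + a)))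
     has_vector_derivative curv_radius h (x + a) *\<^sub>R uvec' x) (at x)"
proof -
  note H = H_deriv[OF assms, of a x]
  have P: "((\<lambda>s. perp (hedgehog h (s + a))) has_vector_derivative perp (curv_radius h (x + a) *\<^sub>R uvec' (x + a))) (at x)"
    by (rule bounded_linear.has_vector_derivative[OF bl_perp H])
  have "((\<lambda>s. cos a *\<^sub>R hedgehog h (s + a) - sin a *\<^sub>R perp (hedgehog h (s + a)))
     has_vector_derivative cos a *\<^sub>R (curv_radius h (x + a) *\<^sub>R uvec' (x + a)) - sin a *\<^sub>R perp (curv_radius h (x + a) *\<^sub>R uvec' (x + a))) (at x)"
    by (intro has_vector_derivative_diff bounded_linear.has_vector_derivative[OF bounded_linear_scaleR_right] H P) 
  moreover have "cos a *\<^sub>R (curv_radius h (x + a) *\<^sub>R uvec' (x + a)) - sin a *\<^sub>R perp (curv_radius h (x + a) *\<^sub>R uvec' (x + a))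
     = curv_radius h (x + a) *\<^sub>R uvec' x"
  proof -
    have sc: "cos a * cos a + sin a * sin a = 1" using sin_cos_squared_add[of a] by (simp add: power2_eq_square)
    show ?thesis apply (simp add: uvec'_def perp_def sin_add cos_add algebra_simps)
      using sc by algebra
  qed
  ultimately show ?thesis by simp
qed

lemma uvec_deriv: "(uvec has_vector_derivative uvec' x) (at x)"
proof -
  have e: "uvec = (\<lambda>s. (cos s, sin s))" by (simp add: uvec_def fun_eq_iff)
  have 1: "(cos has_real_derivative - sin x) (at x)" by (auto intro!: derivative_eq_intros)
  have 2: "(sin has_real_derivative cos x) (at x)" by (auto intro!: derivative_eq_intros)
  show ?thesis unfolding e
    using has_vector_derivative_Pair[OF 1[unfolded has_real_derivative_iff_has_vector_derivative]
       2[unfolded has_real_derivative_iff_has_vector_derivative]]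
    by (simp add: uvec'_def)
qed

lemma uvec'_deriv: "(uvec' has_vector_derivative - uvec x) (at x)"
proof -
  have e: "uvec' = (\<lambda>s. (- sin s, cos s))" by (simp add: uvec'_def fun_eq_iff)
  have 1: "((\<lambda>s. - sin s) has_real_derivative - cos x) (at x)" by (auto intro!: derivative_eq_intros)
  have 2: "(cos has_real_derivative - sin x) (at x)" by (auto intro!: derivative_eq_intros)
  show ?thesis unfolding e
    using has_vector_derivative_Pair[OF 1[unfolded has_real_derivative_iff_has_vector_derivative]
       2[unfolded has_real_derivative_iff_has_vector_derivative]]
    by (simp add: uvec_def)
qed

lemma curv_deriv_eq:
  assumes "smooth_fun h"
  shows "deriv (curv_radius h) = (\<lambda>y. deriv h y + deriv (deriv (deriv h)) y)"
proof
  fix y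
  have "((\<lambda>s. h (s + 0) + deriv (deriv h) (s + 0)) has_real_derivative deriv h (y + 0) + deriv (deriv (deriv h)) (y + 0)) (at y)"
    by (intro DERIV_add smooth_D0[OF assms] smooth_D2[OF assms])
  hence "(curv_radius h has_real_derivative deriv h y + deriv (deriv (deriv h)) y) (at y)"
    by (simp add: curv_radius_def[abs_def])
  thus "deriv (curv_radius h) y = deriv h y + deriv (deriv (deriv h)) y" by (rule DERIV_imp_deriv)
qed

lemma smooth_D4: "smooth_fun h \<Longrightarrow> ((\<lambda>s. deriv (deriv (deriv (deriv h))) (s + t)) has_real_derivative deriv (deriv (deriv (deriv (deriv h)))) (x + t)) (at x)"
  using smooth_D[of h 4] by (simp add: numeral_eq_Suc)

lemma curv_D: "smooth_fun h \<Longrightarrow> ((\<lambda>s. curv_radius h (s + t)) has_real_derivative deriv (curv_radius h) (x + t)) (at x)"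
  unfolding curv_deriv_eq curv_radius_def by (intro DERIV_add smooth_D0 smooth_D2)

lemma curv_DD: "smooth_fun h \<Longrightarrow> ((\<lambda>s. deriv (curv_radius h) (s + t)) has_real_derivative
   deriv (deriv h) (x + t) + deriv (deriv (deriv (deriv h))) (x + t)) (at x)"
  unfolding curv_deriv_eq by (intro DERIV_add smooth_D1 smooth_D3)

theorem proposition3p15:
  fixes h :: "real \<Rightarrow> real" and k :: nat and s :: real
  assumes "smooth_fun h"
    and "\<forall>x. h (x + 2 * pi) = h x"
    and "k > 2"
    and "s \<in> {0..2*pi}"
  shows "(singular_point (OPS h k) s \<longleftrightarrow>
           (1 / real k) * (\<Sum>j = 1..k. curv_radius h (s + 2 * pi * real j / real k))
             = (1 / 2) * avg_width h)
       \<and> (singular_point (OPS h k) s \<longrightarrow>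
           (is_cusp (OPS h k) s \<longleftrightarrow>
             (\<Sum>j = 1..k. deriv (curv_radius h) (s + 2 * pi * real j / real k)) \<noteq> 0))"
proof -
  note sm = assms(1)
  define th where "th j = 2 * pi * real j / real k" for j :: nat
  define c where "c = (1 / 2) * avg_width h"
  define A where "A x = (1 / real k) * (\<Sum>j = 1..k. curv_radius h (x + th j))" for x
  define A1 where "A1 x = (1 / real k) * (\<Sum>j = 1..k. deriv (curv_radius h) (x + th j))" for x
  define A2 where "A2 x = (1 / real k) * (\<Sum>j = 1..k. deriv (deriv h) (x + th j) + deriv (deriv (deriv (deriv h))) (x + th j))" for x
  have dA: "(A has_real_derivative A1 x) (at x)" for x
    unfolding A_def[abs_def] A1_def
    by (intro DERIV_cmult DERIV_sum curv_D[OF sm])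
  have dA1: "(A1 has_real_derivative A2 x) (at x)" for x
    unfolding A1_def[abs_def] A2_def
    by (intro DERIV_cmult DERIV_sum curv_DD[OF sm])
  have eO: "OPS h k = (\<lambda>s. (1 / real k) *\<^sub>R (\<Sum>j = 1..k. cos (th j) *\<^sub>R hedgehog h (s + th j)
      - sin (th j) *\<^sub>R perp (hedgehog h (s + th j))) - c *\<^sub>R uvec s)"
    by (simp add: OPS_def th_def c_def fun_eq_iff)
  have d1: "(OPS h k has_vector_derivative (A x - c) *\<^sub>R uvec' x) (at x)" for x
  proof -
    have "(OPS h k has_vector_derivative (1 / real k) *\<^sub>R (\<Sum>j = 1..k. curv_radius h (x + th j) *\<^sub>R uvec' x) - c *\<^sub>R uvec' x) (at x)"
      unfolding eO
      by (intro has_vector_derivative_diff bounded_linear.has_vector_derivative[OF bounded_linear_scaleR_right]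
          has_vector_derivative_sum T_deriv[OF sm] uvec_deriv)
    moreover have "(1 / real k) *\<^sub>R (\<Sum>j = 1..k. curv_radius h (x + th j) *\<^sub>R uvec' x) - c *\<^sub>R uvec' x = (A x - c) *\<^sub>R uvec' x"
      by (simp add: A_def scaleR_sum_left[symmetric] algebra_simps)
    ultimately show ?thesis by simp
  qed
  have C1: "cderiv (OPS h k) = (\<lambda>x. (A x - c) *\<^sub>R uvec' x)"
    using d1 by (simp add: cderiv_def fun_eq_iff vector_derivative_at)
  have d2: "((\<lambda>x. (A x - c) *\<^sub>R uvec' x) has_vector_derivative (A x - c) *\<^sub>R (- uvec x) + A1 x *\<^sub>R uvec' x) (at x)" for x
    using has_vector_derivative_scaleR[OF DERIV_diff[OF dA DERIV_const] uvec'_deriv, of c x] by simp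
  have C2: "cderiv (cderiv (OPS h k)) = (\<lambda>x. (A x - c) *\<^sub>R (- uvec x) + A1 x *\<^sub>R uvec' x)"
    unfolding C1 using d2 by (simp add: cderiv_def fun_eq_iff vector_derivative_at)
  have d3: "((\<lambda>x. (A x - c) *\<^sub>R (- uvec x) + A1 x *\<^sub>R uvec' x) has_vector_derivative
     ((A x - c) *\<^sub>R (- uvec' x) + A1 x *\<^sub>R (- uvec x)) + (A1 x *\<^sub>R (- uvec x) + A2 x *\<^sub>R uvec' x)) (at x)" for x
    using has_vector_derivative_add[OF has_vector_derivative_scaleR[OF DERIV_diff[OF dA DERIV_const]
       has_vector_derivative_minus[OF uvec_deriv]]
      has_vector_derivative_scaleR[OF dA1 uvec'_deriv], of c x] by simp
  have C3: "cderiv (cderiv (cderiv (OPS h k))) = (\<lambda>x. ((A x - c) *\<^sub>R (- uvec' x) + A1 x *\<^sub>R (- uvec x)) + (A1 x *\<^sub>R (- uvec x) + A2 x *\<^sub>R uvec' x))"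
    unfolding C2 using d3 by (simp add: cderiv_def fun_eq_iff vector_derivative_at)
  have u'nz: "uvec' x \<noteq> 0" for x
    using sin_zero_norm_cos_one[of x] by (auto simp: uvec'_def zero_prod_def)
  have sing: "singular_point (OPS h k) s \<longleftrightarrow> A s = c"
    using u'nz[of s] by (simp add: singular_point_def C1)
  have kpos: "real k > 0" using assms(3) by simp
  show ?thesis
  proof (intro conjI impI)
    show "singular_point (OPS h k) s \<longleftrightarrow>
           (1 / real k) * (\<Sum>j = 1..k. curv_radius h (s + 2 * pi * real j / real k)) = (1 / 2) * avg_width h"
      unfolding sing A_def th_def c_def ..
    assume "singular_point (OPS h k) s"
    hence As: "A s = c" using sing by simp
    have det: "det2 (cderiv (cderiv (OPS h k)) s) (cderiv (cderiv (cderiv (OPS h k))) s) = 2 * (A1 s)^2"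
    proof -
      have sc: "cos s * cos s + sin s * sin s = 1" using sin_cos_squared_add[of s] by (simp add: power2_eq_square)
      show ?thesis apply (subst C3) apply (subst C2) unfolding As apply (simp add: det2_def uvec_def uvec'_def algebra_simps)
        using sc by algebra
    qed
    have "A1 s \<noteq> 0 \<longleftrightarrow> (\<Sum>j = 1..k. deriv (curv_radius h) (s + 2 * pi * real j / real k)) \<noteq> 0"
      using kpos by (simp add: A1_def th_def)
    thus "is_cusp (OPS h k) s \<longleftrightarrow> (\<Sum>j = 1..k. deriv (curv_radius h) (s + 2 * pi * real j / real k)) \<noteq> 0"
      unfolding is_cusp_def det using \<open>singular_point (OPS h k) s\<close> by (simp add: singular_point_def)
  qed
qed
end
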